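(* Let $G$ be a maximal outerplanar graph with at least four vertices (with a fixed outerplanar embedding). Let $uv$ be an edge on the outer face of $G$ with $\deg_G(u)>2$ and $\deg_G(v)>2$, and let $w=\Delta(uv)$. Let $G_u=G_u(uv)$ and $G_v=G_v(uv)$ be the $uv$-segments. Then $$\mathrm{mvc}(G)=\min\{\mathrm{mvc}_{w}(G_u)+\mathrm{mvc}_{vw}(G_v)-1,\ \mathrm{mvc}_{uw}(G_u)+\mathrm{mvc}_{w}(G_v)-1,\ \mathrm{mvc}(G_u)+\mathrm{mvc}(G_v)\}.$$
   Context: All graphs are finite and simple. A maximal outerplanar graph is an outerplanar graph to which no edge between existing vertices can be added while keeping it outerplanar. A fixed outerplanar embedding, with all vertices on the outer face, is assumed. For $S\subseteq V(G)$, $\mathrm{mvc}_S(G)$ is the minimum size of a vertex cover of $G$ containing $S$, and $\mathrm{mvc}(G)=\mathrm{mvc}_\emptyset(G)$. Braces are dropped for small sets, e.g. $\mathrm{mvc}_{uw}(G)=\mathrm{mvc}_{\{u,w\}}(G)$. For a maximal outerplanar graph with at least three vertices and an edge $uv$ on its outer face, $\Delta(uv)$ denotes the unique common neighbor of $u$ and $v$. $uv$-segments: let $w=\Delta(uv)$. $G_u(uv)$ is the maximal biconnected outerplanar subgraph of $G$ that has $uw$ on its outer face and does not contain $v$. Equivalently, it is the subgraph induced by $u$, $w$ and the vertices lying on the side of the edge $uw$ that does not contain $v$. It is the single edge $uw$ if $\deg_G(u)=2$. $G_v(uv)$ is defined symmetrically with the roles of $u$ and $v$ exchanged. $G_u$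 and $G_v$ are themselves maximal outerplanar graphs with outer edges $uw$ and $vw$ respectively. *)

theory Defs
  imports Main
begin

definition graph :: "'a set \<Rightarrow> 'a set set \<Rightarrow> bool" where
  "graph V E \<longleftrightarrow> finite V \<and> (\<forall>e\<in>E. \<exists>x y. e = {x, y} \<and> x \<noteq> y \<and> x \<in> V \<and> y \<in> V)"

definition degree :: "'a set set \<Rightarrow> 'a \<Rightarrow> nat" where
  "degree E x = card {y. {x, y} \<in> E}"

text \<open>Outerplanar embedding, combinatorially: the vertices are placed in cyclic order
  (positions 0..n-1 on a circle), and no two edges cross as chords.\<close>
definition crossing :: "('a \<Rightarrow> nat) \<Rightarrow> 'a set \<Rightarrow> 'a set \<Rightarrow> bool" where
  "crossing f e1 e2 \<longleftrightarrow> (\<exists>a b c d. e1 = {a, b} \<and> e2 = {c, d} \<and> f a < f c \<and> f c < f b \<and> f b < f d)"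

definition outerplanar_embedding :: "'a set \<Rightarrow> 'a set set \<Rightarrow> ('a \<Rightarrow> nat) \<Rightarrow> bool" where
  "outerplanar_embedding V E f \<longleftrightarrow> graph V E \<and> bij_betw f V {0..<card V} \<and>
     (\<forall>e1\<in>E. \<forall>e2\<in>E. \<not> crossing f e1 e2)"

definition outerplanar :: "'a set \<Rightarrow> 'a set set \<Rightarrow> bool" where
  "outerplanar V E \<longleftrightarrow> (\<exists>f. outerplanar_embedding V E f)"

definition maximal_outerplanar :: "'a set \<Rightarrow> 'a set set \<Rightarrow> bool" where
  "maximal_outerplanar V E \<longleftrightarrow> graph V E \<and> outerplanar V E \<and>
     (\<forall>x\<in>V. \<forall>y\<in>V. x \<noteq> y \<longrightarrow> {x, y} \<notin> E \<longrightarrow> \<not> outerplanar V (insert {x, y} E))"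

text \<open>Edges on the outer face of the embedding: edges joining cyclically consecutive vertices.\<close>
definition outer_edge :: "'a set \<Rightarrow> 'a set set \<Rightarrow> ('a \<Rightarrow> nat) \<Rightarrow> 'a \<Rightarrow> 'a \<Rightarrow> bool" where
  "outer_edge V E f u v \<longleftrightarrow> u \<in> V \<and> v \<in> V \<and> {u, v} \<in> E \<and>
     (f v = (f u + 1) mod card V \<or> f u = (f v + 1) mod card V)"

definition Delta :: "'a set \<Rightarrow> 'a set set \<Rightarrow> 'a \<Rightarrow> 'a \<Rightarrow> 'a" where
  "Delta V E u v = (THE w. w \<in> V \<and> {u, w} \<in> E \<and> {v, w} \<in> E)"

text \<open>Positions strictly inside the cyclic arc going forward from position a to position c.\<close>
definition open_arc :: "nat \<Rightarrow> nat \<Rightarrow> nat \<Rightarrow> nat set" where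
  "open_arc n a c = {b. 0 < (int b - int a) mod int n \<and> (int b - int a) mod int n < (int c - int a) mod int n}"

text \<open>Vertices lying strictly on the side of the chord xw that does not contain y.\<close>
definition side_without :: "'a set \<Rightarrow> ('a \<Rightarrow> nat) \<Rightarrow> 'a \<Rightarrow> 'a \<Rightarrow> 'a \<Rightarrow> 'a set" where
  "side_without V f x w y =
     (let n = card V;
          A1 = {z\<in>V. f z \<in> open_arc n (f x) (f w)};
          A2 = {z\<in>V. f z \<in> open_arc n (f w) (f x)}
      in if y \<in> A1 then A2 else A1)"

definition induced_edges :: "'a set set \<Rightarrow> 'a set \<Rightarrow> 'a set set" where
  "induced_edges E W = {e\<in>E. e \<subseteq> W}"

text \<open>The segment G_x(xy) (for an outer edge xy, with w = Delta(xy)): vertex set and edge set.\<close>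
definition seg_V :: "'a set \<Rightarrow> 'a set set \<Rightarrow> ('a \<Rightarrow> nat) \<Rightarrow> 'a \<Rightarrow> 'a \<Rightarrow> 'a set" where
  "seg_V V E f x y = {x, Delta V E x y} \<union> side_without V f x (Delta V E x y) y"

definition seg_E :: "'a set \<Rightarrow> 'a set set \<Rightarrow> ('a \<Rightarrow> nat) \<Rightarrow> 'a \<Rightarrow> 'a \<Rightarrow> 'a set set" where
  "seg_E V E f x y = induced_edges E (seg_V V E f x y)"

definition vertex_cover :: "'a set \<Rightarrow> 'a set set \<Rightarrow> 'a set \<Rightarrow> bool" where
  "vertex_cover V E C \<longleftrightarrow> C \<subseteq> V \<and> (\<forall>e\<in>E. e \<inter> C \<noteq> {})"

definition mvc_S :: "'a set \<Rightarrow> 'a set set \<Rightarrow> 'a set \<Rightarrow> nat" where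
  "mvc_S V E S = (LEAST k. \<exists>C. vertex_cover V E C \<and> S \<subseteq> C \<and> card C = k)"

definition mvc :: "'a set \<Rightarrow> 'a set set \<Rightarrow> nat" where
  "mvc V E = mvc_S V E {}"

end

theory Submission
  imports Defs
begin


lemma rot_fg:
  fixes f :: "'a \<Rightarrow> nat"
  assumes "f a < n" "f b < n" "f c < n" "f d < n" "p < n"
    and "f a < f c" "f c < f b" "f b < f d"
  shows "let g = (\<lambda>z. if p \<le> f z then f z - p else f z + n - p) in
   (g a<g c \<and> g c<g b \<and> g b<g d) \<or> (g c<g b \<and> g b<g d \<and> g d<g a) \<or>
   (g b<g d \<and> g d<g a \<and> g a<g c) \<or> (g d<g a \<and> g a<g c \<and> g c<g b)"
  unfolding Let_def using assms
  by (cases "p \<le> f a"; cases "p \<le> f b"; cases "p \<le> f c"; cases "p \<le> f d"; simp; linarith)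

lemma rot_gf:
  fixes f :: "'a \<Rightarrow> nat"
  assumes "f a < n" "f b < n" "f c < n" "f d < n" "p < n"
    and "g = (\<lambda>z. if p \<le> f z then f z - p else f z + n - p)"
    and "g a < g c" "g c < g b" "g b < g d"
  shows "(f a<f c \<and> f c<f b \<and> f b<f d) \<or> (f c<f b \<and> f b<f d \<and> f d<f a) \<or>
   (f b<f d \<and> f d<f a \<and> f a<f c) \<or> (f d<f a \<and> f a<f c \<and> f c<f b)"
  using assms
  by (cases "p \<le> f a"; cases "p \<le> f b"; cases "p \<le> f c"; cases "p \<le> f d"; simp; linarith)

lemma cross_transfer:
  assumes rot: "\<And>a b c d. a\<in>V \<Longrightarrow> b\<in>V \<Longrightarrow> c\<in>V \<Longrightarrow> d\<in>V \<Longrightarrow> h1 a < h1 c \<Longrightarrow> h1 c < h1 b \<Longrightarrow> h1 b < h1 d \<Longrightarrow>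
     (h2 a<h2 c \<and> h2 c<h2 b \<and> h2 b<h2 d) \<or> (h2 c<h2 b \<and> h2 b<h2 d \<and> h2 d<h2 a) \<or>
     (h2 b<h2 d \<and> h2 d<h2 a \<and> h2 a<h2 c) \<or> (h2 d<h2 a \<and> h2 a<h2 c \<and> h2 c<h2 b)"
    and "e1 \<subseteq> V" "e2 \<subseteq> V" "crossing h1 e1 e2"
  shows "crossing h2 e1 e2 \<or> crossing h2 e2 e1"
proof -
  obtain a b c d where e: "e1 = {a,b}" "e2 = {c,d}" "h1 a < h1 c" "h1 c < h1 b" "h1 b < h1 d"
    using assms(4) unfolding crossing_def by blast
  have V: "a\<in>V" "b\<in>V" "c\<in>V" "d\<in>V" using e assms(2,3) by auto
  from rot[OF V e(3-5)] show ?thesis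
  proof (elim disjE)
    assume h: "h2 a<h2 c \<and> h2 c<h2 b \<and> h2 b<h2 d"
    show ?thesis unfolding crossing_def
      by (rule disjI1, rule exI[of _ a], rule exI[of _ b], rule exI[of _ c], rule exI[of _ d]) (use h e in auto)
  next
    assume h: "h2 c<h2 b \<and> h2 b<h2 d \<and> h2 d<h2 a"
    show ?thesis unfolding crossing_def
      by (rule disjI2, rule exI[of _ c], rule exI[of _ d], rule exI[of _ b], rule exI[of _ a]) (use h e in \<open>auto simp: insert_commute\<close>)
  next
    assume h: "h2 b<h2 d \<and> h2 d<h2 a \<and> h2 a<h2 c"
    show ?thesis unfolding crossing_def
      by (rule disjI1, rule exI[of _ b], rule exI[of _ a], rule exI[of _ d], rule exI[of _ c]) (use h e in \<open>auto simp: insert_commute\<close>)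
  next
    assume h: "h2 d<h2 a \<and> h2 a<h2 c \<and> h2 c<h2 b"
    show ?thesis unfolding crossing_def
      by (rule disjI2, rule exI[of _ d], rule exI[of _ c], rule exI[of _ a], rule exI[of _ b]) (use h e in \<open>auto simp: insert_commute\<close>)
  qed
qed

lemma mvc_le: "vertex_cover V E C \<Longrightarrow> S \<subseteq> C \<Longrightarrow> mvc_S V E S \<le> card C"
  unfolding mvc_S_def by (rule Least_le) blast

lemma mvc_ex:
  assumes "finite V" "S \<subseteq> V" "\<forall>e\<in>E. e \<subseteq> V \<and> e \<noteq> {}"
  shows "\<exists>C. vertex_cover V E C \<and> S \<subseteq> C \<and> card C = mvc_S V E S"
proof -
  have "\<exists>k C. vertex_cover V E C \<and> S \<subseteq> C \<and> card C = k"
    using assms unfolding vertex_cover_def by (intro exI[of _ "card V"] exI[of _ V]) auto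
  from LeastI_ex[OF this]
  have "\<exists>C. vertex_cover V E C \<and> S \<subseteq> C \<and> card C = (LEAST k. \<exists>C. vertex_cover V E C \<and> S \<subseteq> C \<and> card C = k)" .
  thus ?thesis unfolding mvc_S_def .
qed


lemma combi:
  assumes fin: "finite V" and ee: "\<forall>e\<in>E. e \<subseteq> V \<and> e \<noteq> {}"
    and VuV: "Vu \<subseteq> V" and VvV: "Vv \<subseteq> V" and un: "Vu \<union> Vv = V" and it: "Vu \<inter> Vv = {w}"
    and uVu: "u \<in> Vu" and vVv: "v \<in> Vv" and uw: "u \<noteq> w" and vw: "v \<noteq> w"
    and uvE: "{u,v} \<in> E" and uwE: "{u,w} \<in> E" and vwE: "{v,w} \<in> E"
    and part: "\<forall>e\<in>E. e \<subseteq> Vu \<or> e \<subseteq> Vv \<or> e = {u,v}"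
  shows "int (mvc V E) = min (min (int (mvc_S Vu (induced_edges E Vu) {w}) + int (mvc_S Vv (induced_edges E Vv) {v, w}) - 1)
                     (int (mvc_S Vu (induced_edges E Vu) {u, w}) + int (mvc_S Vv (induced_edges E Vv) {w}) - 1))
                (int (mvc Vu (induced_edges E Vu)) + int (mvc Vv (induced_edges E Vv)))"
proof -
  define Eu where "Eu = induced_edges E Vu"
  define Ev where "Ev = induced_edges E Vv"
  have finu: "finite Vu" "finite Vv" using fin VuV VvV finite_subset by auto
  have eu: "\<forall>e\<in>Eu. e \<subseteq> Vu \<and> e \<noteq> {}" using ee unfolding Eu_def induced_edges_def by auto
  have ev: "\<forall>e\<in>Ev. e \<subseteq> Vv \<and> e \<noteq> {}" using ee unfolding Ev_def induced_edges_def by auto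
  have wVu: "w \<in> Vu" and wVv: "w \<in> Vv" using it by auto
  have uwEu: "{u,w} \<in> Eu" using uwE uVu wVu unfolding Eu_def induced_edges_def by auto
  have vwEv: "{v,w} \<in> Ev" using vwE vVv wVv unfolding Ev_def induced_edges_def by auto
  define a where "a = mvc_S Vu Eu {w}"
  define b where "b = mvc_S Vv Ev {v,w}"
  define c where "c = mvc_S Vu Eu {u,w}"
  define d where "d = mvc_S Vv Ev {w}"
  define e where "e = mvc Vu Eu"
  define g where "g = mvc Vv Ev"
  define m where "m = mvc V E"
  obtain Ca where Ca: "vertex_cover Vu Eu Ca" "{w} \<subseteq> Ca" "card Ca = a"
    using mvc_ex[OF finu(1) _ eu, of "{w}"] wVu unfolding a_def by auto
  obtain Cb where Cb: "vertex_cover Vv Ev Cb" "{v,w} \<subseteq> Cb" "card Cb = b"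
    using mvc_ex[OF finu(2) _ ev, of "{v,w}"] wVv vVv unfolding b_def by auto
  obtain Cc where Cc: "vertex_cover Vu Eu Cc" "{u,w} \<subseteq> Cc" "card Cc = c"
    using mvc_ex[OF finu(1) _ eu, of "{u,w}"] wVu uVu unfolding c_def by auto
  obtain Cd where Cd: "vertex_cover Vv Ev Cd" "{w} \<subseteq> Cd" "card Cd = d"
    using mvc_ex[OF finu(2) _ ev, of "{w}"] wVv unfolding d_def by auto
  obtain Ce where Ce: "vertex_cover Vu Eu Ce" "card Ce = e"
    using mvc_ex[OF finu(1) _ eu, of "{}"] unfolding e_def mvc_def by auto
  obtain Cg where Cg: "vertex_cover Vv Ev Cg" "card Cg = g"
    using mvc_ex[OF finu(2) _ ev, of "{}"] unfolding g_def mvc_def by auto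
  have cov: "vertex_cover V E (X \<union> Y)" if X: "vertex_cover Vu Eu X" and Y: "vertex_cover Vv Ev Y"
    and uv: "u \<in> X \<union> Y \<or> v \<in> X \<union> Y" for X Y
    unfolding vertex_cover_def
  proof (intro conjI ballI)
    show "X \<union> Y \<subseteq> V" using X Y VuV VvV unfolding vertex_cover_def by auto
  next
    fix ed assume ed: "ed \<in> E"
    from part ed have "ed \<subseteq> Vu \<or> ed \<subseteq> Vv \<or> ed = {u,v}" by auto
    then show "ed \<inter> (X \<union> Y) \<noteq> {}"
    proof (elim disjE)
      assume "ed \<subseteq> Vu" hence "ed \<in> Eu" using ed unfolding Eu_def induced_edges_def by auto
      thus ?thesis using X unfolding vertex_cover_def by auto
    next
      assume "ed \<subseteq> Vv" hence "ed \<in> Ev" using ed unfolding Ev_def induced_edges_def by auto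
      thus ?thesis using Y unfolding vertex_cover_def by auto
    qed (use uv in auto)
  qed
  have cardun: "card (X \<union> Y) + card (X \<inter> Y) = card X + card Y" if "X \<subseteq> Vu" "Y \<subseteq> Vv" for X Y
    using card_Un_Int[of X Y] finu that finite_subset by metis
  have sub: "X \<subseteq> Vu" if "vertex_cover Vu Eu X" for X using that unfolding vertex_cover_def by auto
  have subv: "X \<subseteq> Vv" if "vertex_cover Vv Ev X" for X using that unfolding vertex_cover_def by auto
  have m_le: "m \<le> card C" if "vertex_cover V E C" for C using mvc_le[OF that, of "{}"] unfolding m_def mvc_def by auto
  have h1: "m + 1 \<le> a + b"
  proof -
    have "Ca \<inter> Cb = {w}" using sub[OF Ca(1)] subv[OF Cb(1)] it Ca(2) Cb(2) by auto
    thus ?thesis using cardun[OF sub[OF Ca(1)] subv[OF Cb(1)]] m_le[OF cov[OF Ca(1) Cb(1)]] Cb(2) Ca(3) Cb(3) by auto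
  qed
  have h2: "m + 1 \<le> c + d"
  proof -
    have "Cc \<inter> Cd = {w}" using sub[OF Cc(1)] subv[OF Cd(1)] it Cc(2) Cd(2) by auto
    thus ?thesis using cardun[OF sub[OF Cc(1)] subv[OF Cd(1)]] m_le[OF cov[OF Cc(1) Cd(1)]] Cc(2) Cc(3) Cd(3) by auto
  qed
  have h3: "m \<le> e + g"
  proof (cases "w \<in> Ce \<and> w \<in> Cg")
    case True
    have i: "Ce \<inter> Cg = {w}" using sub[OF Ce(1)] subv[OF Cg(1)] it True by auto
    have cu: "vertex_cover Vu Eu (insert u Ce)" using Ce(1) uVu unfolding vertex_cover_def by auto
    have "m \<le> card (insert u Ce \<union> Cg)" using m_le[OF cov[OF cu Cg(1)]] by auto
    also have "\<dots> \<le> card (Ce \<union> Cg) + 1"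
      using card_insert_le_m1 finu sub[OF Ce(1)] subv[OF Cg(1)] finite_subset
      by (metis Un_insert_left card_insert_if finite_Un le_refl add.commute plus_1_eq_Suc le_SucI)
    finally show ?thesis using cardun[OF sub[OF Ce(1)] subv[OF Cg(1)]] i Ce(2) Cg(2) by auto
  next
    case False
    have i: "Ce \<inter> Cg = {}" using sub[OF Ce(1)] subv[OF Cg(1)] it False by auto
    have "u \<in> Ce \<or> v \<in> Cg"
    proof (cases "w \<in> Ce")
      case True
      with False have "w \<notin> Cg" by auto
      thus ?thesis using Cg(1) vwEv unfolding vertex_cover_def by force
    next
      case False
      thus ?thesis using Ce(1) uwEu unfolding vertex_cover_def by force
    qed
    hence "m \<le> card (Ce \<union> Cg)" using m_le[OF cov[OF Ce(1) Cg(1)]] by auto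
    thus ?thesis using cardun[OF sub[OF Ce(1)] subv[OF Cg(1)]] i Ce(2) Cg(2) by auto
  qed
  obtain C where C: "vertex_cover V E C" "card C = m"
    using mvc_ex[OF fin _ ee, of "{}"] unfolding m_def mvc_def by auto
  define Cu where "Cu = C \<inter> Vu"
  define Cv where "Cv = C \<inter> Vv"
  have CuC: "vertex_cover Vu Eu Cu" using C(1) unfolding Cu_def vertex_cover_def Eu_def induced_edges_def by blast
  have CvC: "vertex_cover Vv Ev Cv" using C(1) unfolding Cv_def vertex_cover_def Ev_def induced_edges_def by blast
  have CU: "C = Cu \<union> Cv" using C(1) un unfolding Cu_def Cv_def vertex_cover_def by auto
  have CI: "Cu \<inter> Cv = C \<inter> {w}" using it unfolding Cu_def Cv_def by auto
  have cc: "card C + card (C \<inter> {w}) = card Cu + card Cv"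
    using cardun[of Cu Cv] CU CI unfolding Cu_def Cv_def by auto
  have uvC: "u \<in> C \<or> v \<in> C" using C(1) uvE unfolding vertex_cover_def by force
  have h4: "a + b \<le> m + 1 \<or> c + d \<le> m + 1 \<or> e + g \<le> m"
  proof (cases "w \<in> C")
    case True
    hence cc': "m + 1 = card Cu + card Cv" using cc C(2) by auto
    show ?thesis
    proof (cases "v \<in> C")
      case True
      have "a \<le> card Cu" unfolding a_def using mvc_le[OF CuC] \<open>w \<in> C\<close> wVu unfolding Cu_def by auto
      moreover have "b \<le> card Cv" unfolding b_def using mvc_le[OF CvC] \<open>w \<in> C\<close> True wVv vVv unfolding Cv_def by auto
      ultimately show ?thesis using cc' by auto
    next
      case False
      hence "u \<in> C" using uvC by auto
      have "c \<le> card Cu" unfolding c_def using mvc_le[OF CuC] \<open>w \<in> C\<close> \<open>u \<in> C\<close> wVu uVu unfolding Cu_def by auto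
      moreover have "d \<le> card Cv" unfolding d_def using mvc_le[OF CvC] \<open>w \<in> C\<close> wVv unfolding Cv_def by auto
      ultimately show ?thesis using cc' by auto
    qed
  next
    case False
    hence cc': "m = card Cu + card Cv" using cc C(2) by auto
    have "e \<le> card Cu" unfolding e_def mvc_def using mvc_le[OF CuC] by auto
    moreover have "g \<le> card Cv" unfolding g_def mvc_def using mvc_le[OF CvC] by auto
    ultimately show ?thesis using cc' by auto
  qed
  have "int m = min (min (int a + int b - 1) (int c + int d - 1)) (int e + int g)"
    using h1 h2 h3 h4 by (auto simp: min_def)
  thus ?thesis unfolding m_def a_def b_def c_def d_def e_def g_def Eu_def Ev_def .
qed



lemma int_mod_diff:
  assumes "a < n" "b < n"
  shows "(int a - int b) mod int n = (if b \<le> a then int a - int b else int a - int b + int n)"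
proof (cases "b \<le> a")
  case True thus ?thesis using assms by (simp add: mod_pos_pos_trivial)
next
  case False
  have "(int a - int b) mod int n = (int a - int b + int n) mod int n" by simp
  also have "\<dots> = int a - int b + int n" using assms False by (intro mod_pos_pos_trivial) auto
  finally show ?thesis using False by simp
qed

lemma rot_mod:
  fixes f :: "'a \<Rightarrow> nat"
  assumes "p < n" "f z < n" "f y < n"
  shows "(int (f z) - int (f y)) mod int n =
    (int (if p \<le> f z then f z - p else f z + n - p) - int (if p \<le> f y then f y - p else f y + n - p)) mod int n"
proof -
  obtain k where k: "int (if p \<le> f z then f z - p else f z + n - p) - int (if p \<le> f y then f y - p else f y + n - p)
     = int (f z) - int (f y) + k * int n"
  proof (cases "p \<le> f z"; cases "p \<le> f y")
    assume "p \<le> f z" "p \<le> f y" thus ?thesis using that[of 0] by auto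
  next
    assume "p \<le> f z" "\<not> p \<le> f y" thus ?thesis using that[of "-1"] assms by auto
  next
    assume "\<not> p \<le> f z" "p \<le> f y" thus ?thesis using that[of "1"] assms by auto
  next
    assume "\<not> p \<le> f z" "\<not> p \<le> f y" thus ?thesis using that[of 0] assms by auto
  qed
  show ?thesis unfolding k by simp
qed



lemma rot_fg':
  fixes f :: "'a \<Rightarrow> nat"
  assumes "f a < n" "f b < n" "f c < n" "f d < n" "p < n"
    and g: "g = (\<lambda>z. if p \<le> f z then f z - p else f z + n - p)"
    and "f a < f c" "f c < f b" "f b < f d"
  shows "(g a<g c \<and> g c<g b \<and> g b<g d) \<or> (g c<g b \<and> g b<g d \<and> g d<g a) \<or>
   (g b<g d \<and> g d<g a \<and> g a<g c) \<or> (g d<g a \<and> g a<g c \<and> g c<g b)"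
  using rot_fg[where f=f and a=a and b=b and c=c and d=d and n=n and p=p, OF assms(1-5,7-9)] unfolding g Let_def .

lemma geo:
  assumes mo: "maximal_outerplanar V E" and emb: "outerplanar_embedding V E f" and n4: "card V \<ge> 4"
    and uV: "u \<in> V" and vV: "v \<in> V" and uv: "{u,v} \<in> E" and fv: "f v = (f u + 1) mod card V"
    and dv: "degree E v > 2"
  shows "Delta V E u v \<in> V \<and> {u, Delta V E u v} \<in> E \<and> {v, Delta V E u v} \<in> E \<and>
    u \<noteq> Delta V E u v \<and> v \<noteq> Delta V E u v \<and> Delta V E v u = Delta V E u v \<and>
    seg_V V E f u v \<subseteq> V \<and> seg_V V E f v u \<subseteq> V \<and>
    seg_V V E f u v \<union> seg_V V E f v u = V \<and> seg_V V E f u v \<inter> seg_V V E f v u = {Delta V E u v} \<and>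
    u \<in> seg_V V E f u v \<and> v \<in> seg_V V E f v u \<and>
    (\<forall>e\<in>E. e \<subseteq> seg_V V E f u v \<or> e \<subseteq> seg_V V E f v u \<or> e = {u,v})"
proof -
  define n where "n = card V"
  have gr: "graph V E" and bij: "bij_betw f V {0..<n}" and nc: "\<forall>e1\<in>E. \<forall>e2\<in>E. \<not> crossing f e1 e2"
    using emb unfolding outerplanar_embedding_def n_def by auto
  have fin: "finite V" using gr unfolding graph_def by auto
  have fV: "\<And>z. z \<in> V \<Longrightarrow> f z < n" using bij bij_betwE by fastforce
  have finj: "inj_on f V" using bij bij_betw_def by auto
  have n4': "n \<ge> 4" using n4 n_def by auto
  define p where "p = f u"
  have pn: "p < n" using fV uV p_def by auto
  define g where "g = (\<lambda>z. if p \<le> f z then f z - p else f z + n - p)"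
  have gV: "\<And>z. z \<in> V \<Longrightarrow> g z < n"
  proof -
    fix z assume "z \<in> V" hence "f z < n" by (rule fV)
    thus "g z < n" unfolding g_def using pn by auto
  qed
  have ginj: "\<And>x y. x \<in> V \<Longrightarrow> y \<in> V \<Longrightarrow> g x = g y \<Longrightarrow> x = y"
  proof -
    fix x y assume xy: "x \<in> V" "y \<in> V" "g x = g y"
    hence "f x = f y" using fV[OF xy(1)] fV[OF xy(2)] pn unfolding g_def by (auto split: if_splits)
    thus "x = y" using finj xy inj_on_def by metis
  qed
  have gu: "g u = 0" unfolding g_def p_def by simp
  have gv: "g v = 1"
  proof (cases "p + 1 < n")
    case True thus ?thesis using fv unfolding g_def p_def n_def by simp
  next
    case False hence "p + 1 = n" using pn by auto
    thus ?thesis using fv n4 unfolding g_def p_def n_def by auto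
  qed
  have E_sub: "\<And>x y. {x,y} \<in> E \<Longrightarrow> x \<in> V \<and> y \<in> V \<and> x \<noteq> y"
  proof -
    fix x y assume "{x,y} \<in> E"
    then obtain a b where "{x,y} = {a,b}" "a \<noteq> b" "a \<in> V" "b \<in> V" using gr unfolding graph_def by blast
    thus "x \<in> V \<and> y \<in> V \<and> x \<noteq> y" by (auto simp: doubleton_eq_iff)
  qed
  have e_sub: "\<And>e. e \<in> E \<Longrightarrow> e \<subseteq> V"
  proof -
    fix e assume "e \<in> E"
    then obtain a b where "e = {a,b}" "a \<in> V" "b \<in> V" using gr unfolding graph_def by blast
    thus "e \<subseteq> V" by simp
  qed
  have rgf: "\<And>a b c d. a\<in>V \<Longrightarrow> b\<in>V \<Longrightarrow> c\<in>V \<Longrightarrow> d\<in>V \<Longrightarrow> g a < g c \<Longrightarrow> g c < g b \<Longrightarrow> g b < g d \<Longrightarrow>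
     (f a<f c \<and> f c<f b \<and> f b<f d) \<or> (f c<f b \<and> f b<f d \<and> f d<f a) \<or>
     (f b<f d \<and> f d<f a \<and> f a<f c) \<or> (f d<f a \<and> f a<f c \<and> f c<f b)"
  proof -
    fix a b c d assume h: "a\<in>V" "b\<in>V" "c\<in>V" "d\<in>V" "g a < g c" "g c < g b" "g b < g d"
    show "(f a<f c \<and> f c<f b \<and> f b<f d) \<or> (f c<f b \<and> f b<f d \<and> f d<f a) \<or>
     (f b<f d \<and> f d<f a \<and> f a<f c) \<or> (f d<f a \<and> f a<f c \<and> f c<f b)"
      by (rule rot_gf[where f=f and a=a and b=b and c=c and d=d and n=n and p=p and g=g,
           OF fV[OF h(1)] fV[OF h(2)] fV[OF h(3)] fV[OF h(4)] pn g_def h(5-7)])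
  qed
  have rfg: "\<And>a b c d. a\<in>V \<Longrightarrow> b\<in>V \<Longrightarrow> c\<in>V \<Longrightarrow> d\<in>V \<Longrightarrow> f a < f c \<Longrightarrow> f c < f b \<Longrightarrow> f b < f d \<Longrightarrow>
     (g a<g c \<and> g c<g b \<and> g b<g d) \<or> (g c<g b \<and> g b<g d \<and> g d<g a) \<or>
     (g b<g d \<and> g d<g a \<and> g a<g c) \<or> (g d<g a \<and> g a<g c \<and> g c<g b)"
  proof -
    fix a b c d assume h: "a\<in>V" "b\<in>V" "c\<in>V" "d\<in>V" "f a < f c" "f c < f b" "f b < f d"
    show "(g a<g c \<and> g c<g b \<and> g b<g d) \<or> (g c<g b \<and> g b<g d \<and> g d<g a) \<or>
     (g b<g d \<and> g d<g a \<and> g a<g c) \<or> (g d<g a \<and> g a<g c \<and> g c<g b)"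
      by (rule rot_fg'[where f=f and a=a and b=b and c=c and d=d and n=n and p=p and g=g,
           OF fV[OF h(1)] fV[OF h(2)] fV[OF h(3)] fV[OF h(4)] pn g_def h(5-7)])
  qed
  have ncg: "\<And>a b c d. {a,b} \<in> E \<Longrightarrow> {c,d} \<in> E \<Longrightarrow> g a < g c \<Longrightarrow> g c < g b \<Longrightarrow> g b < g d \<Longrightarrow> False"
  proof -
    fix a b c d assume h: "{a,b} \<in> E" "{c,d} \<in> E" "g a < g c" "g c < g b" "g b < g d"
    have "crossing g {a,b} {c,d}" unfolding crossing_def using h by blast
    from cross_transfer[of V g f, OF rgf e_sub[OF h(1)] e_sub[OF h(2)] this]
    show False using nc h by blast
  qed
  define N where "N = {y \<in> V. {v,y} \<in> E \<and> y \<noteq> u}"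
  have Nne: "N \<noteq> {}"
  proof
    assume "N = {}"
    hence "{y. {v,y} \<in> E} \<subseteq> {u}" unfolding N_def using E_sub by blast
    hence "card {y. {v,y} \<in> E} \<le> 1" using card_mono[of "{u}"] by fastforce
    thus False using dv unfolding degree_def by auto
  qed
  have Nfin: "finite N" using fin unfolding N_def by auto
  obtain x where xN: "x \<in> N" and xmax: "\<And>y. y \<in> N \<Longrightarrow> g y \<le> g x"
  proof -
    have "Max (g ` N) \<in> g ` N" using Nne Nfin by auto
    then obtain x where "x \<in> N" "g x = Max (g ` N)" by auto
    thus ?thesis using that Nfin by auto
  qed
  have xV: "x \<in> V" and vx: "{v,x} \<in> E" and xu: "x \<noteq> u" using xN unfolding N_def by auto
  have xv: "x \<noteq> v" using E_sub[OF vx] by auto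
  have gx2: "g x \<ge> 2"
  proof -
    have "g x \<noteq> 0" using ginj[OF xV uV] gu xu by auto
    moreover have "g x \<noteq> 1" using ginj[OF xV vV] gv xv by auto
    ultimately show ?thesis by auto
  qed
  have ge2: "\<And>y. y \<in> V \<Longrightarrow> y \<noteq> u \<Longrightarrow> y \<noteq> v \<Longrightarrow> g y \<ge> 2"
  proof -
    fix y assume y: "y \<in> V" "y \<noteq> u" "y \<noteq> v"
    have "g y \<noteq> 0" using ginj[OF y(1) uV] gu y by auto
    moreover have "g y \<noteq> 1" using ginj[OF y(1) vV] gv y by auto
    ultimately show "g y \<ge> 2" by auto
  qed
  have ux: "{u,x} \<in> E"
  proof (rule ccontr)
    assume nux: "{u,x} \<notin> E"
    define E' where "E' = insert {u,x} E"
    have ncg': "\<not> crossing g e1 e2" if "e1 \<in> E'" "e2 \<in> E'" for e1 e2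
    proof
      assume "crossing g e1 e2"
      then obtain a b c d where abcd: "e1 = {a,b}" "e2 = {c,d}" "g a < g c" "g c < g b" "g b < g d"
        unfolding crossing_def by blast
      show False
      proof (cases "e1 = {u,x}")
        case True
        hence ab: "(a = u \<and> b = x) \<or> (a = x \<and> b = u)" using abcd(1) by (auto simp: doubleton_eq_iff)
        show False
        proof (cases "e2 = {u,x}")
          case True
          hence "c = u \<or> c = x" using abcd(2) by (auto simp: doubleton_eq_iff)
          thus False using ab abcd by auto
        next
          case False
          hence cdE: "{c,d} \<in> E" using that(2) abcd(2) unfolding E'_def by auto
          have ab': "a = u \<and> b = x" using ab abcd gu by auto
          have cV: "c \<in> V" and dV: "d \<in> V" using E_sub[OF cdE] by auto
          show False
          proof (cases "c = v")
            case True
            have "d \<noteq> u" using abcd gu by auto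
            hence "d \<in> N" using dV cdE True unfolding N_def by auto
            thus False using xmax abcd ab' by fastforce
          next
            case False
            have "c \<noteq> u" using abcd ab' gu by auto
            hence "g c \<ge> 2" using ge2[OF cV] False by auto
            thus False using ncg[OF vx cdE] abcd ab' gv by auto
          qed
        qed
      next
        case False
        hence e1E: "{a,b} \<in> E" using that(1) abcd(1) unfolding E'_def by auto
        show False
        proof (cases "e2 = {u,x}")
          case True
          hence "(c = u \<and> d = x) \<or> (c = x \<and> d = u)" using abcd(2) by (auto simp: doubleton_eq_iff)
          thus False using abcd gu by auto
        next
          case False
          hence "{c,d} \<in> E" using that(2) abcd(2) unfolding E'_def by auto
          thus False using ncg[OF e1E] abcd by blast
        qed
      qed
    qed
    have "outerplanar V E'"
      unfolding outerplanar_def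
    proof (intro exI[of _ f])
      show "outerplanar_embedding V E' f"
        unfolding outerplanar_embedding_def
      proof (intro conjI ballI)
        show "graph V E'" using gr uV xV xu unfolding graph_def E'_def by auto
        show "bij_betw f V {0..<card V}" using bij n_def by simp
        fix e1 e2 assume e: "e1 \<in> E'" "e2 \<in> E'"
        have sub: "e1 \<subseteq> V" "e2 \<subseteq> V" using e e_sub uV xV unfolding E'_def by auto
        show "\<not> crossing f e1 e2"
        proof
          assume "crossing f e1 e2"
          from cross_transfer[of V f g, OF rfg sub this] show False using ncg' e by blast
        qed
      qed
    qed
    moreover have "\<not> outerplanar V E'"
      using mo uV xV xu nux unfolding maximal_outerplanar_def E'_def by metis
    ultimately show False by simp
  qed
  have uniq: "\<And>y. y \<in> V \<Longrightarrow> {u,y} \<in> E \<Longrightarrow> {v,y} \<in> E \<Longrightarrow> y = x"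
  proof -
    fix y assume y: "y \<in> V" "{u,y} \<in> E" "{v,y} \<in> E"
    have "y \<noteq> u" "y \<noteq> v" using E_sub[OF y(2)] E_sub[OF y(3)] by auto
    hence gy: "g y \<ge> 2" using ge2 y(1) by auto
    have "\<not> g y < g x" using ncg[of u y v x] y ux vx gu gv gy by auto
    moreover have "\<not> g x < g y" using ncg[of u x v y] y ux vx gu gv gx2 by auto
    ultimately show "y = x" using ginj[OF y(1) xV] by auto
  qed
  have D1: "Delta V E u v = x" unfolding Delta_def
    by (rule the_equality) (use xV ux vx uniq in blast)+
  have D2: "Delta V E v u = x" unfolding Delta_def
    by (rule the_equality) (use xV ux vx uniq in blast)+
  define r where "r = g x"
  have rn: "r < n" using gV xV r_def by auto
  have D: "\<And>z y. z \<in> V \<Longrightarrow> y \<in> V \<Longrightarrow> (int (f z) - int (f y)) mod int n =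
      (if g y \<le> g z then int (g z) - int (g y) else int (g z) - int (g y) + int n)"
  proof -
    fix z y assume "z \<in> V" "y \<in> V"
    have "(int (f z) - int (f y)) mod int n = (int (g z) - int (g y)) mod int n"
      unfolding g_def by (rule rot_mod[where f=f and z=z and y=y and n=n and p=p, OF pn fV[OF \<open>z \<in> V\<close>] fV[OF \<open>y \<in> V\<close>]])
    also have "\<dots> = (if g y \<le> g z then int (g z) - int (g y) else int (g z) - int (g y) + int n)"
      using int_mod_diff gV \<open>z \<in> V\<close> \<open>y \<in> V\<close> by blast
    finally show "(int (f z) - int (f y)) mod int n =
      (if g y \<le> g z then int (g z) - int (g y) else int (g z) - int (g y) + int n)" .
  qed
  have arc: "\<And>z y t. z \<in> V \<Longrightarrow> y \<in> V \<Longrightarrow> t \<in> V \<Longrightarrow> f z \<in> open_arc n (f y) (f t) \<longleftrightarrow>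
      0 < (if g y \<le> g z then int (g z) - int (g y) else int (g z) - int (g y) + int n) \<and>
      (if g y \<le> g z then int (g z) - int (g y) else int (g z) - int (g y) + int n) <
      (if g y \<le> g t then int (g t) - int (g y) else int (g t) - int (g y) + int n)"
    unfolding open_arc_def using D by simp
  have S1: "side_without V f u x v = {z \<in> V. r < g z}"
  proof -
    have A1v: "v \<in> {z \<in> V. f z \<in> open_arc n (f u) (f x)}" using arc[OF vV uV xV] gu gv gx2 vV by auto
    have "{z \<in> V. f z \<in> open_arc n (f x) (f u)} = {z \<in> V. r < g z}"
      using arc[OF _ xV uV] gu gV gx2 unfolding r_def by (auto split: if_splits)
    thus ?thesis using A1v unfolding side_without_def Let_def n_def by simp
  qed
  have S2: "side_without V f v x u = {z \<in> V. 1 < g z \<and> g z < r}"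
  proof -
    have A1u: "u \<notin> {z \<in> V. f z \<in> open_arc n (f v) (f x)}" using arc[OF uV vV xV] gu gv gx2 rn unfolding r_def by auto
    have "{z \<in> V. f z \<in> open_arc n (f v) (f x)} = {z \<in> V. 1 < g z \<and> g z < r}"
      using arc[OF _ vV xV] gv gV gx2 gV[OF xV] unfolding r_def by (auto split: if_splits)
    thus ?thesis using A1u unfolding side_without_def Let_def n_def by auto
  qed
  have Vu: "seg_V V E f u v = {z \<in> V. g z = 0 \<or> r \<le> g z}"
  proof (rule set_eqI)
    fix z
    have "z \<in> {u,x} \<union> {z \<in> V. r < g z} \<longleftrightarrow> z \<in> V \<and> (g z = 0 \<or> r \<le> g z)"
    proof
      assume "z \<in> {u,x} \<union> {z \<in> V. r < g z}"
      thus "z \<in> V \<and> (g z = 0 \<or> r \<le> g z)" using uV xV gu unfolding r_def by auto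
    next
      assume z: "z \<in> V \<and> (g z = 0 \<or> r \<le> g z)"
      show "z \<in> {u,x} \<union> {z \<in> V. r < g z}"
      proof (cases "g z = 0")
        case True thus ?thesis using ginj[of z u] z uV gu by simp
      next
        case False
        show ?thesis
        proof (cases "g z = r")
          case True thus ?thesis using ginj[of z x] z xV unfolding r_def by simp
        next
          case False thus ?thesis using z \<open>g z \<noteq> 0\<close> by simp
        qed
      qed
    qed
    thus "z \<in> seg_V V E f u v \<longleftrightarrow> z \<in> {z \<in> V. g z = 0 \<or> r \<le> g z}"
      unfolding seg_V_def D1 S1 by simp
  qed
  have Vv: "seg_V V E f v u = {z \<in> V. 1 \<le> g z \<and> g z \<le> r}"
  proof (rule set_eqI)
    fix z
    have "z \<in> {v,x} \<union> {z \<in> V. 1 < g z \<and> g z < r} \<longleftrightarrow> z \<in> V \<and> 1 \<le> g z \<and> g z \<le> r"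
    proof
      assume "z \<in> {v,x} \<union> {z \<in> V. 1 < g z \<and> g z < r}"
      thus "z \<in> V \<and> 1 \<le> g z \<and> g z \<le> r" using vV xV gv gx2 unfolding r_def by auto
    next
      assume z: "z \<in> V \<and> 1 \<le> g z \<and> g z \<le> r"
      show "z \<in> {v,x} \<union> {z \<in> V. 1 < g z \<and> g z < r}"
      proof (cases "g z = 1")
        case True thus ?thesis using ginj[of z v] z vV gv by simp
      next
        case False
        show ?thesis
        proof (cases "g z = r")
          case True thus ?thesis using ginj[of z x] z xV unfolding r_def by simp
        next
          case False thus ?thesis using z \<open>g z \<noteq> 1\<close> by simp
        qed
      qed
    qed
    thus "z \<in> seg_V V E f v u \<longleftrightarrow> z \<in> {z \<in> V. 1 \<le> g z \<and> g z \<le> r}"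
      unfolding seg_V_def D2 S2 by simp
  qed
  have helper: "\<And>a b. {a,b} \<in> E \<Longrightarrow> g a = 0 \<or> r < g a \<Longrightarrow> 1 \<le> g b \<Longrightarrow> g b < r \<Longrightarrow> a = u \<and> b = v"
  proof -
    fix a b assume h: "{a,b} \<in> E" "g a = 0 \<or> r < g a" "1 \<le> g b" "g b < r"
    have aV: "a \<in> V" and bV: "b \<in> V" using E_sub[OF h(1)] by auto
    show "a = u \<and> b = v"
    proof (cases "g a = 0")
      case True
      hence au: "a = u" using ginj[OF aV uV] gu by auto
      show ?thesis
      proof (cases "g b = 1")
        case True thus ?thesis using au ginj[OF bV vV] gv by auto
      next
        case False
        thus ?thesis using ncg[of u b v x] h au vx gu gv r_def by auto
      qed
    next
      case False
      hence "r < g a" using h by auto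
      moreover have "{b,a} \<in> E" using h(1) by (simp add: insert_commute)
      ultimately show ?thesis using ncg[of u x b a] ux h gu r_def by auto
    qed
  qed
  have part: "\<forall>e\<in>E. e \<subseteq> seg_V V E f u v \<or> e \<subseteq> seg_V V E f v u \<or> e = {u,v}"
  proof
    fix e assume eE: "e \<in> E"
    then obtain a b where ab: "e = {a,b}" "a \<in> V" "b \<in> V" using gr unfolding graph_def by blast
    have ba: "{b,a} \<in> E" using eE ab by (simp add: insert_commute)
    show "e \<subseteq> seg_V V E f u v \<or> e \<subseteq> seg_V V E f v u \<or> e = {u,v}"
      unfolding Vu Vv ab(1)
    proof -
      show "{a, b} \<subseteq> {z \<in> V. g z = 0 \<or> r \<le> g z} \<or> {a, b} \<subseteq> {z \<in> V. 1 \<le> g z \<and> g z \<le> r} \<or> {a, b} = {u, v}"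
    proof (cases "(g a = 0 \<or> r < g a) \<and> 1 \<le> g b \<and> g b < r")
      case True thus ?thesis using helper[of a b] eE ab by auto
    next
      case F1: False
      show ?thesis
      proof (cases "(g b = 0 \<or> r < g b) \<and> 1 \<le> g a \<and> g a < r")
        case True thus ?thesis using helper[OF ba] by (auto simp: insert_commute)
      next
        case False thus ?thesis using F1 ab by auto
      qed
    qed
    qed
  qed
  have s1: "seg_V V E f u v \<union> seg_V V E f v u = V" unfolding Vu Vv by auto
  have s2: "seg_V V E f u v \<inter> seg_V V E f v u = {x}"
  proof (rule set_eqI)
    fix z
    show "z \<in> seg_V V E f u v \<inter> seg_V V E f v u \<longleftrightarrow> z \<in> {x}"
    proof
      assume "z \<in> seg_V V E f u v \<inter> seg_V V E f v u"
      hence z: "z \<in> V" "g z = r" unfolding Vu Vv by auto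
      show "z \<in> {x}" using ginj[OF z(1) xV] z(2) unfolding r_def by simp
    next
      assume "z \<in> {x}"
      hence "z = x" by simp
      thus "z \<in> seg_V V E f u v \<inter> seg_V V E f v u" unfolding Vu Vv using xV gx2 unfolding r_def by simp
    qed
  qed
  have s3: "seg_V V E f u v \<subseteq> V" "seg_V V E f v u \<subseteq> V" unfolding Vu Vv by auto
  have s4: "u \<in> seg_V V E f u v" unfolding Vu using uV gu by simp
  have s5: "v \<in> seg_V V E f v u" unfolding Vv using vV gv gx2 unfolding r_def by simp
  show ?thesis
    unfolding D1 D2
    using xV ux vx xu xv part s1 s2 s3 s4 s5 by blast
qed



lemma min_swap: "min (min ((a::int)+b-1) (c+d-1)) (e+g) = min (min (d+c-1) (b+a-1)) (g+e)"
  by (simp add: min_def)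

theorem lemma1:
  fixes V :: "'a set" and E :: "'a set set" and f :: "'a \<Rightarrow> nat" and u v :: 'a
  assumes "maximal_outerplanar V E"
    and "outerplanar_embedding V E f"
    and "card V \<ge> 4"
    and "outer_edge V E f u v"
    and "degree E u > 2" and "degree E v > 2"
  shows "let w = Delta V E u v;
             Vu = seg_V V E f u v; Eu = seg_E V E f u v;
             Vv = seg_V V E f v u; Ev = seg_E V E f v u
         in int (mvc V E) =
            min (min (int (mvc_S Vu Eu {w}) + int (mvc_S Vv Ev {v, w}) - 1)
                     (int (mvc_S Vu Eu {u, w}) + int (mvc_S Vv Ev {w}) - 1))
                (int (mvc Vu Eu) + int (mvc Vv Ev))"
proof -
  have gr: "graph V E" using assms(2) unfolding outerplanar_embedding_def by auto
  have fin: "finite V" using gr unfolding graph_def by auto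
  have ee: "\<forall>e\<in>E. e \<subseteq> V \<and> e \<noteq> {}" using gr unfolding graph_def by fastforce
  have uV: "u \<in> V" and vV: "v \<in> V" and uvE: "{u,v} \<in> E"
    and ori: "f v = (f u + 1) mod card V \<or> f u = (f v + 1) mod card V"
    using assms(4) unfolding outer_edge_def by auto
  have vuE: "{v,u} \<in> E" using uvE by (simp add: insert_commute)
  show ?thesis
  proof (cases "f v = (f u + 1) mod card V")
    case True
    note G = geo[OF assms(1,2,3) uV vV uvE True assms(6)]
    have C: "int (mvc V E) = min (min (int (mvc_S (seg_V V E f u v) (induced_edges E (seg_V V E f u v)) {Delta V E u v}) + int (mvc_S (seg_V V E f v u) (induced_edges E (seg_V V E f v u)) {v, Delta V E u v}) - 1)
                     (int (mvc_S (seg_V V E f u v) (induced_edges E (seg_V V E f u v)) {u, Delta V E u v}) + int (mvc_S (seg_V V E f v u) (induced_edges E (seg_V V E f v u)) {Delta V E u v}) - 1))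
                (int (mvc (seg_V V E f u v) (induced_edges E (seg_V V E f u v))) + int (mvc (seg_V V E f v u) (induced_edges E (seg_V V E f v u))))"
      by (rule combi[OF fin ee]) (use G uvE in simp_all)
    show ?thesis unfolding Let_def seg_E_def using C .
  next
    case False
    hence fu: "f u = (f v + 1) mod card V" using ori by auto
    note G = geo[OF assms(1,2,3) vV uV vuE fu assms(5)]
    have DD: "Delta V E u v = Delta V E v u" using G by simp
    have C: "int (mvc V E) = min (min (int (mvc_S (seg_V V E f v u) (induced_edges E (seg_V V E f v u)) {Delta V E v u}) + int (mvc_S (seg_V V E f u v) (induced_edges E (seg_V V E f u v)) {u, Delta V E v u}) - 1)
                     (int (mvc_S (seg_V V E f v u) (induced_edges E (seg_V V E f v u)) {v, Delta V E v u}) + int (mvc_S (seg_V V E f u v) (induced_edges E (seg_V V E f u v)) {Delta V E v u}) - 1))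
                (int (mvc (seg_V V E f v u) (induced_edges E (seg_V V E f v u))) + int (mvc (seg_V V E f u v) (induced_edges E (seg_V V E f u v))))"
      by (rule combi[OF fin ee]) (use G vuE in simp_all)
    show ?thesis unfolding Let_def seg_E_def DD using C min_swap by simp
  qed
qed


end
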